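(* Let $M,N$ be positive integers and $C_0,\dots,C_{N-1}\in\{0,1,\dots,M-1\}$. For $p\in\{0,\dots,M-1\}$, $q\in\{0,\dots,N-1\}$ let $\bm\psi_{p,q}\in\mathbb{C}^N$ have entries $[\bm\psi_{p,q}]_n=\frac{1}{\sqrt N}e^{j\frac{2\pi p}{M}C_n+j\frac{2\pi q}{N}n}$, $n=0,\dots,N-1$, and let $\bm\Psi_q=[\bm\psi_{0,q},\dots,\bm\psi_{M-1,q}]\in\mathbb{C}^{N\times M}$. Then for all $q_1,q_2\in\{0,\dots,N-1\}$ the matrix $\bm X_{q_1,q_2}:=\bm\Psi_{q_1}^H\bm\Psi_{q_2}\in\mathbb{C}^{M\times M}$ is a circulant matrix.
   Context: $j$ denotes the imaginary unit and $(\cdot)^H$ the conjugate transpose. A circulant matrix is a square matrix in which each row is obtained from the preceding row by a cyclic shift one position to the right, i.e. $[\bm A]_{p_1,p_2}=[\bm A]_{0,(p_2-p_1)\bmod M}$. *)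

theory Defs
  imports "Jordan_Normal_Form.Schur_Decomposition"
begin

definition psi :: "nat \<Rightarrow> nat \<Rightarrow> (nat \<Rightarrow> nat) \<Rightarrow> nat \<Rightarrow> nat \<Rightarrow> complex vec" where
  "psi M N C p q = vec N (\<lambda>n. complex_of_real (1 / sqrt (real N)) *
      exp (\<i> * complex_of_real (2 * pi * real p / real M) * of_nat (C n)
         + \<i> * complex_of_real (2 * pi * real q / real N) * of_nat n))"

definition Psi :: "nat \<Rightarrow> nat \<Rightarrow> (nat \<Rightarrow> nat) \<Rightarrow> nat \<Rightarrow> complex mat" where
  "Psi M N C q = mat_of_cols N (map (\<lambda>p. psi M N C p q) [0..<M])"

definition circulant :: "'a mat \<Rightarrow> bool" where
  "circulant A \<longleftrightarrow> dim_row A = dim_col A \<and>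
     (\<forall>p1 < dim_row A. \<forall>p2 < dim_row A.
        A $$ (p1, p2) = A $$ (0, nat ((int p2 - int p1) mod int (dim_row A))))"

end

theory Submission imports Defs begin

lemma exp_int_period: "exp (z + \<i> * of_real (2*pi) * of_int m) = exp z"
proof -
  have e1: "exp (of_nat k * (2 * of_real pi * \<i>)) = 1" for k :: nat
    by (simp only: exp_of_nat_mult exp_two_pi_i power_one)
  have e: "exp (of_int m * (2 * of_real pi * \<i>)) = 1" for m :: int
  proof (cases "m \<ge> 0")
    case True
    then obtain k where "m = int k" using nonneg_int_cases by blast
    then show ?thesis using e1[of k] by simp
  next
    case False
    then obtain k where k: "m = - int k" by (intro that[of "nat (-m)"]) simp
    have "exp (of_int m * (2 * of_real pi * \<i>)) = exp (- (of_nat k * (2 * of_real pi * \<i>)))"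
      unfolding k by simp
    also have "\<dots> = 1" unfolding exp_minus e1 by simp
    finally show ?thesis .
  qed
  have "z + \<i> * of_real (2*pi) * of_int m = z + of_int m * (2 * of_real pi * \<i>)" by (simp add: algebra_simps)
  then show ?thesis by (simp only: exp_add e mult_1_right)
qed

lemma my_exp_cnj: "cnj (exp z) = exp (cnj z)"
  by (simp add: complex_eq_iff Re_exp Im_exp)

definition g :: "nat \<Rightarrow> nat \<Rightarrow> (nat \<Rightarrow> nat) \<Rightarrow> nat \<Rightarrow> nat \<Rightarrow> int \<Rightarrow> complex" where
  "g M N C q1 q2 k = (\<Sum>n<N. complex_of_real (1 / real N) *
     exp (\<i> * complex_of_real (2 * pi * real_of_int k / real M) * of_nat (C n)
        + \<i> * complex_of_real (2 * pi * (real q2 - real q1) / real N) * of_nat n))"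

lemma g_mod: assumes "M > 0" shows "g M N C q1 q2 k = g M N C q1 q2 (k mod int M)"
  unfolding g_def
proof (rule sum.cong[OF refl])
  fix n
  let ?r = "k mod int M" and ?d = "k div int M"
  have k: "real_of_int k = real_of_int ?r + real M * real_of_int ?d"
    by (metis add.commute mult_div_mod_eq of_int_add of_int_mult of_int_of_nat_eq)
  have kr: "2 * pi * real_of_int k / real M = 2 * pi * real_of_int ?r / real M + 2 * pi * real_of_int ?d"
    using assms unfolding k by (simp add: field_simps)
  define A where "A = \<i> * complex_of_real (2 * pi * real_of_int ?r / real M) * of_nat (C n)"
  define B where "B = \<i> * complex_of_real (2 * pi * (real q2 - real q1) / real N) * of_nat n"
  define P where "P = \<i> * of_real (2*pi) * (of_int (?d * int (C n)) :: complex)"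
  have eq: "\<i> * complex_of_real (2 * pi * real_of_int k / real M) * of_nat (C n) = A + P"
    unfolding A_def P_def kr of_real_add by (simp add: algebra_simps)
  have "\<i> * complex_of_real (2 * pi * real_of_int k / real M) * of_nat (C n) + B = (A + B) + P"
    unfolding eq by (simp only: add_ac)
  then have "exp (\<i> * complex_of_real (2 * pi * real_of_int k / real M) * of_nat (C n) + B) = exp (A + B)"
    unfolding P_def by (simp only: exp_int_period)
  then show "complex_of_real (1 / real N) *
     exp (\<i> * complex_of_real (2 * pi * real_of_int k / real M) * of_nat (C n)
        + \<i> * complex_of_real (2 * pi * (real q2 - real q1) / real N) * of_nat n) =
    complex_of_real (1 / real N) *
     exp (\<i> * complex_of_real (2 * pi * real_of_int ?r / real M) * of_nat (C n)
        + \<i> * complex_of_real (2 * pi * (real q2 - real q1) / real N) * of_nat n)"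
    unfolding A_def B_def by (simp only:)
qed

lemma term_eq: assumes "n < N"
  shows "cnj (psi M N C i q1 $ n) * psi M N C j q2 $ n =
    complex_of_real (1 / real N) *
     exp (\<i> * complex_of_real (2 * pi * real_of_int (int j - int i) / real M) * of_nat (C n)
        + \<i> * complex_of_real (2 * pi * (real q2 - real q1) / real N) * of_nat n)"
proof -
  have s: "complex_of_real (1 / sqrt (real N)) * complex_of_real (1 / sqrt (real N)) = complex_of_real (1 / real N)"
    unfolding of_real_mult[symmetric] by (simp add: real_sqrt_mult[symmetric])
  let ?c = "complex_of_real (1 / sqrt (real N))"
  let ?e1 = "- \<i> * complex_of_real (2 * pi * real i / real M) * complex_of_nat (C n) +
          - \<i> * complex_of_real (2 * pi * real q1 / real N) * complex_of_nat n"
  let ?e2 = "\<i> * complex_of_real (2 * pi * real j / real M) * complex_of_nat (C n) +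
          \<i> * complex_of_real (2 * pi * real q2 / real N) * complex_of_nat n"
  have r1: "2 * pi * real_of_int (int j - int i) / real M = 2 * pi * real j / real M - 2 * pi * real i / real M"
    by (simp add: diff_divide_distrib algebra_simps)
  have r2: "2 * pi * (real q2 - real q1) / real N = 2 * pi * real q2 / real N - 2 * pi * real q1 / real N"
    by (simp add: diff_divide_distrib algebra_simps)
  have ex: "?e1 + ?e2 = \<i> * complex_of_real (2 * pi * real_of_int (int j - int i) / real M) * of_nat (C n)
        + \<i> * complex_of_real (2 * pi * (real q2 - real q1) / real N) * of_nat n"
    unfolding r1 r2 of_real_diff by (simp add: algebra_simps)
  have "cnj (psi M N C i q1 $ n) * psi M N C j q2 $ n = ?c * exp ?e1 * ?c * exp ?e2"
    using assms unfolding psi_def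
    apply (simp only: index_vec complex_cnj_mult complex_cnj_complex_of_real my_exp_cnj)
    apply (simp only: complex_cnj_add complex_cnj_mult complex_cnj_i complex_cnj_complex_of_real complex_cnj_of_nat)
    apply (simp only: mult.assoc)
    done
  also have "\<dots> = (?c * ?c) * exp (?e1 + ?e2)" unfolding exp_add by (simp only: mult_ac)
  finally show ?thesis unfolding s ex .
qed

lemma Psi_eq: "Psi M N C q = mat N M (\<lambda>(n,p). psi M N C p q $ n)"
  unfolding Psi_def mat_of_cols_def by (rule eq_matI) auto

lemma adj_eq: "A \<in> carrier_mat N M \<Longrightarrow> mat_adjoint A = mat M N (\<lambda>(i,n). cnj (A $$ (n,i)))"
  unfolding mat_adjoint_def mat_of_rows_def by (rule eq_matI) auto

lemma X_entry: assumes "i < M" "j < M"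
  shows "(mat_adjoint (Psi M N C q1) * Psi M N C q2) $$ (i,j) = (\<Sum>n<N. cnj (psi M N C i q1 $ n) * psi M N C j q2 $ n)"
proof -
  have c: "Psi M N C q1 \<in> carrier_mat N M" unfolding Psi_eq by simp
  show ?thesis unfolding adj_eq[OF c] unfolding Psi_eq
    using assms apply (subst index_mult_mat) apply simp apply simp
    unfolding scalar_prod_def apply (simp only: dim_col_mat dim_row_mat index_row index_col dim_col)
    apply (rule sum.cong) apply auto done
qed

lemma X_g: assumes "i < M" "j < M"
  shows "(mat_adjoint (Psi M N C q1) * Psi M N C q2) $$ (i,j) = g M N C q1 q2 (int j - int i)"
  unfolding X_entry[OF assms] g_def by (rule sum.cong[OF refl]) (simp add: term_eq)

lemma X_carrier: "mat_adjoint (Psi M N C q1) * Psi M N C q2 \<in> carrier_mat M M"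
proof -
  have c: "Psi M N C q1 \<in> carrier_mat N M" unfolding Psi_eq by simp
  show ?thesis unfolding adj_eq[OF c] unfolding Psi_eq by (rule mult_carrier_mat[of _ M N]) auto
qed

theorem lemma1:
  fixes M N :: nat and C :: "nat \<Rightarrow> nat" and q1 q2 :: nat
  assumes "M > 0" and "N > 0"
    and "\<forall>n < N. C n < M"
    and "q1 < N" and "q2 < N"
  shows "circulant (mat_adjoint (Psi M N C q1) * Psi M N C q2)
         \<and> mat_adjoint (Psi M N C q1) * Psi M N C q2 \<in> carrier_mat M M"
proof -
  let ?X = "mat_adjoint (Psi M N C q1) * Psi M N C q2"
  have cX: "?X \<in> carrier_mat M M" by (rule X_carrier)
  have "?X $$ (p1, p2) = ?X $$ (0, nat ((int p2 - int p1) mod int M))" if "p1 < M" "p2 < M" for p1 p2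
  proof -
    let ?r = "(int p2 - int p1) mod int M"
    have r0: "?r \<ge> 0" "?r < int M" using assms(1) by auto
    then have rl: "nat ?r < M" by linarith
    have "?X $$ (p1, p2) = g M N C q1 q2 (int p2 - int p1)" using X_g that by blast
    also have "\<dots> = g M N C q1 q2 ?r" using g_mod assms(1) by blast
    also have "\<dots> = g M N C q1 q2 (int (nat ?r) - int 0)" using r0 by simp
    also have "\<dots> = ?X $$ (0, nat ?r)" using X_g[OF assms(1) rl] by simp
    finally show ?thesis .
  qed
  moreover have d: "dim_row ?X = M" "dim_col ?X = M" using cX by (simp_all only: carrier_matD)
  ultimately show ?thesis unfolding circulant_def d using cX by blast
qed

end
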